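(* Let $m\le n$, let $A\in\mathbb{C}^{m\times n}$ have rank $m$, and let $G\le\mathrm{SL}_m(\mathbb{C})$ be a symmetric subgroup with $K=G\cap\mathrm{SU}_m$. Let $C_A(KX)=\log\kappa_F(XA)$. Then for every $X\in G$ and $H\in i\mathrm{Lie}(K)$, with $P=XAA^*X^*$, $$\tfrac12\langle H,\nabla^2C_A(KX)H\rangle=\frac{\mathrm{tr}(H^2P)}{\mathrm{tr}(P)}-\frac{\mathrm{tr}(HP)^2}{\mathrm{tr}(P)^2}+\frac{\mathrm{tr}(H^2P^{-1})}{\mathrm{tr}(P^{-1})}-\frac{\mathrm{tr}(HP^{-1})^2}{\mathrm{tr}(P^{-1})^2}.$$ Moreover, on the sublevel set $S=\{KX\in G/K: C_A(KX)\le C_A(K)\}$, the smallest eigenvalue of $\nabla^2C_A(KX)$ is at least $4/\kappa_F(A)^2$.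
   Context: $\kappa_F(B)=\|B\|_F\|B^\dagger\|_F$ with $^\dagger$ the Moore–Penrose pseudoinverse. Symmetric subgroup: Zariski closed and closed under conjugate transposition. $i\mathrm{Lie}(K)$: Hermitian $H$ with $e^{tH}\in G$ for all $t\in\mathbb{R}$, with inner product $\langle H,H'\rangle=\mathrm{Re}\,\mathrm{tr}(H^*H')$. $G/K$: right cosets. Hessian: $\nabla^2f(KX)$ is the self-adjoint operator on $i\mathrm{Lie}(K)$ with $\langle H,\nabla^2f(KX)H\rangle=\frac{d^2}{dt^2}|_{t=0}f(Ke^{tH}X)$. *)

theory Defs
  imports "HOL-Analysis.Analysis"
begin

type_synonym ('r,'c) cmat = "complex^'c^'r"

definition ctransp :: "complex^'c^'r \<Rightarrow> complex^'r^'c" where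
  "ctransp M = (\<chi> i j. cnj (M $ j $ i))"

definition frob :: "complex^'c^'r \<Rightarrow> real" where
  "frob M = sqrt (\<Sum>i\<in>UNIV. \<Sum>j\<in>UNIV. (cmod (M $ i $ j))\<^sup>2)"

definition is_pinv :: "complex^'c^'r \<Rightarrow> complex^'r^'c \<Rightarrow> bool" where
  "is_pinv M B \<longleftrightarrow> M ** B ** M = M \<and> B ** M ** B = B \<and>
     ctransp (M ** B) = M ** B \<and> ctransp (B ** M) = B ** M"

definition pinv :: "complex^'c^'r \<Rightarrow> complex^'r^'c" where
  "pinv M = (THE B. is_pinv M B)"

definition kappaF :: "complex^'c^'r \<Rightarrow> real" where
  "kappaF B = frob B * frob (pinv B)"

fun mpow :: "complex^'n^'n \<Rightarrow> nat \<Rightarrow> complex^'n^'n" where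
  "mpow M 0 = mat 1"
| "mpow M (Suc k) = M ** mpow M k"

definition mexp :: "complex^'n^'n \<Rightarrow> complex^'n^'n" where
  "mexp M = (\<Sum>k. (1 / fact k) *\<^sub>R mpow M k)"

inductive_set polyfun :: "(complex^'n^'n \<Rightarrow> complex) set" where
  const: "(\<lambda>X. c) \<in> polyfun"
| coord: "(\<lambda>X. X $ i $ j) \<in> polyfun"
| add: "p \<in> polyfun \<Longrightarrow> q \<in> polyfun \<Longrightarrow> (\<lambda>X. p X + q X) \<in> polyfun"
| mult: "p \<in> polyfun \<Longrightarrow> q \<in> polyfun \<Longrightarrow> (\<lambda>X. p X * q X) \<in> polyfun"

definition zariski_closed :: "(complex^'n^'n) set \<Rightarrow> bool" where
  "zariski_closed S \<longleftrightarrow> (\<exists>F \<subseteq> polyfun. S = {X. \<forall>p\<in>F. p X = 0})"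

definition SL :: "(complex^'n^'n) set" where
  "SL = {X. det X = 1}"

definition unitary :: "complex^'n^'n \<Rightarrow> bool" where
  "unitary U \<longleftrightarrow> ctransp U ** U = mat 1"

definition SU :: "(complex^'n^'n) set" where
  "SU = {U. unitary U \<and> det U = 1}"

definition is_subgroup_SL :: "(complex^'n^'n) set \<Rightarrow> bool" where
  "is_subgroup_SL G \<longleftrightarrow> G \<subseteq> SL \<and> mat 1 \<in> G \<and>
     (\<forall>X\<in>G. \<forall>Y\<in>G. X ** Y \<in> G) \<and> (\<forall>X\<in>G. matrix_inv X \<in> G)"

definition symmetric_subgroup :: "(complex^'n^'n) set \<Rightarrow> bool" where
  "symmetric_subgroup G \<longleftrightarrow> is_subgroup_SL G \<and> zariski_closed G \<and>
     (\<forall>X\<in>G. ctransp X \<in> G)"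

definition hermitian :: "complex^'n^'n \<Rightarrow> bool" where
  "hermitian H \<longleftrightarrow> ctransp H = H"

text \<open>i Lie(K) for K = G \<inter> SU: Hermitian H with exp(tH) in G for all real t.\<close>
definition iLie :: "(complex^'n^'n) set \<Rightarrow> (complex^'n^'n) set" where
  "iLie G = {H. hermitian H \<and> (\<forall>t::real. mexp (t *\<^sub>R H) \<in> G)}"

definition minner :: "complex^'n^'n \<Rightarrow> complex^'n^'n \<Rightarrow> real" where
  "minner H H' = Re (trace (ctransp H ** H'))"

text \<open>The cost C_A(KX) = log kappa_F(XA), written on a representative X of the coset KX
  (well defined since kappa_F is invariant under left multiplication by unitaries).\<close>
definition CA :: "complex^'n^'m \<Rightarrow> complex^'m^'m \<Rightarrow> real" where
  "CA A X = ln (kappaF (X ** A))"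

text \<open>Second directional derivative t \<mapsto> C_A(K e^{tH} X) at t = 0, i.e. the quadratic form
  of the Hessian at the coset KX.\<close>
definition hess_form :: "complex^'n^'m \<Rightarrow> complex^'m^'m \<Rightarrow> complex^'m^'m \<Rightarrow> real" where
  "hess_form A X H = deriv (deriv (\<lambda>t. CA A (mexp (t *\<^sub>R H) ** X))) 0"

definition is_hessian :: "(complex^'m^'m) set \<Rightarrow> complex^'n^'m \<Rightarrow> complex^'m^'m
    \<Rightarrow> (complex^'m^'m \<Rightarrow> complex^'m^'m) \<Rightarrow> bool" where
  "is_hessian G A X L \<longleftrightarrow> linear L \<and> (\<forall>H\<in>iLie G. L H \<in> iLie G) \<and>
     (\<forall>H\<in>iLie G. \<forall>H'\<in>iLie G. minner H (L H') = minner (L H) H') \<and>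
     (\<forall>H\<in>iLie G. minner H (L H) = hess_form A X H)"

end

theory Submission
  imports Defs
begin

lemma ctransp_nth[simp]: "ctransp M $ i $ j = cnj (M $ j $ i)"
  by (simp add: ctransp_def)

lemma ctransp_ctransp[simp]: "ctransp (ctransp M) = M"
  by (simp add: vec_eq_iff)

lemma ctransp_mult: "ctransp (A ** B) = ctransp B ** ctransp A"
  by (simp add: vec_eq_iff matrix_matrix_mult_def mult.commute)

lemma ctransp_mat[simp]: "ctransp (mat (of_real r) :: complex^'n^'n) = mat (of_real r)"
  by (simp add: vec_eq_iff mat_def)

lemma ctransp_mat1[simp]: "ctransp (mat 1 :: complex^'n^'n) = mat 1"
  by (simp add: vec_eq_iff mat_def)

lemma ctransp_add: "ctransp (A + B) = ctransp A + ctransp B"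
  by (simp add: vec_eq_iff)

lemma ctransp_scaleR: "ctransp (r *\<^sub>R A) = r *\<^sub>R ctransp A"
  by (simp add: vec_eq_iff)

lemma trace_ctransp: "trace (ctransp M) = cnj (trace M)"
  by (simp add: trace_def)

lemma matrix_inv_both:
  fixes Q :: "complex^'n^'n"
  assumes "invertible Q"
  shows "Q ** matrix_inv Q = mat 1" "matrix_inv Q ** Q = mat 1"
  using assms unfolding invertible_def matrix_inv_def by (metis (mono_tags, lifting) someI_ex)+

lemma matrix_inv_unique:
  fixes Q R :: "complex^'n^'n"
  assumes "Q ** R = mat 1"
  shows "matrix_inv Q = R" "invertible Q"
proof -
  have RQ: "R ** Q = mat 1" using assms matrix_left_right_inverse by blast
  show iQ: "invertible Q" using assms RQ invertible_def by blast
  have "matrix_inv Q = matrix_inv Q ** (Q ** R)" using assms by simp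
  also have "\<dots> = R" by (simp add: matrix_mul_assoc matrix_inv_both[OF iQ])
  finally show "matrix_inv Q = R" .
qed

lemma ctransp_inv:
  fixes Q :: "complex^'n^'n"
  assumes "invertible Q"
  shows "ctransp (matrix_inv Q) = matrix_inv (ctransp Q)" "invertible (ctransp Q)"
proof -
  have "ctransp Q ** ctransp (matrix_inv Q) = mat 1"
    by (simp add: ctransp_mult[symmetric] matrix_inv_both[OF assms])
  then show "ctransp (matrix_inv Q) = matrix_inv (ctransp Q)" "invertible (ctransp Q)"
    using matrix_inv_unique by metis+
qed

lemma hermitian_inv:
  fixes Q :: "complex^'n^'n"
  assumes "invertible Q" "ctransp Q = Q"
  shows "ctransp (matrix_inv Q) = matrix_inv Q"
  using ctransp_inv[OF assms(1)] assms(2) by simp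

lemma frob_sq: "(frob M)^2 = Re (trace (M ** ctransp M))"
proof -
  have "(frob M)^2 = (\<Sum>i\<in>UNIV. \<Sum>j\<in>UNIV. (cmod (M $ i $ j))\<^sup>2)"
    unfolding frob_def by (simp add: sum_nonneg)
  also have "\<dots> = Re (trace (M ** ctransp M))"
  proof -
    have "Re (trace (M ** ctransp M)) = (\<Sum>i\<in>UNIV. \<Sum>j\<in>UNIV. Re (M $ i $ j * cnj (M $ i $ j)))"
      by (simp add: trace_def matrix_matrix_mult_def Re_sum)
    also have "\<dots> = (\<Sum>i\<in>UNIV. \<Sum>j\<in>UNIV. (cmod (M $ i $ j))\<^sup>2)"
      by (simp only: complex_norm_square[symmetric] Re_complex_of_real)
    finally show ?thesis by simp
  qed
  finally show ?thesis .
qed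

lemma frob_sq': "(frob M)^2 = Re (trace (ctransp M ** M))"
  by (metis frob_sq trace_mul_sym)

lemma frob_nonneg: "frob M \<ge> 0" by (simp add: frob_def sum_nonneg)

lemma frob_pos: "M \<noteq> 0 \<Longrightarrow> frob M > 0"
proof -
  assume "M \<noteq> 0"
  then obtain i j where ij: "M $ i $ j \<noteq> 0" by (metis vec_eq_iff zero_index)
  have "(cmod (M $ i $ j))\<^sup>2 \<le> (\<Sum>j\<in>UNIV. (cmod (M $ i $ j))\<^sup>2)"
    by (rule member_le_sum) auto
  also have "\<dots> \<le> (\<Sum>i\<in>UNIV. \<Sum>j\<in>UNIV. (cmod (M $ i $ j))\<^sup>2)"
    by (rule member_le_sum[where f="\<lambda>i. \<Sum>j\<in>UNIV. (cmod (M $ i $ j))\<^sup>2"]) (auto intro: sum_nonneg)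
  finally have le: "(cmod (M $ i $ j))\<^sup>2 \<le> (\<Sum>i\<in>UNIV. \<Sum>j\<in>UNIV. (cmod (M $ i $ j))\<^sup>2)" .
  have "0 < (cmod (M $ i $ j))\<^sup>2" using ij by simp
  then have "0 < (\<Sum>i\<in>UNIV. \<Sum>j\<in>UNIV. (cmod (M $ i $ j))\<^sup>2)" using le by linarith
  then show ?thesis unfolding frob_def by simp
qed

lemma pinv_unique:
  assumes "is_pinv M B" "is_pinv M C"
  shows "B = C"
proof -
  have a1: "M ** B ** M = M" "B ** M ** B = B" "ctransp (M ** B) = M ** B" "ctransp (B ** M) = B ** M"
    using assms(1) unfolding is_pinv_def by auto
  have b1: "M ** C ** M = M" "C ** M ** C = C" "ctransp (M ** C) = M ** C" "ctransp (C ** M) = C ** M"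
    using assms(2) unfolding is_pinv_def by auto
  have "B = B ** (M ** B)" using a1(2) by (simp add: matrix_mul_assoc)
  also have "\<dots> = B ** ctransp (M ** B)" using a1(3) by simp
  also have "\<dots> = B ** (ctransp B ** ctransp (M ** C ** M))" using b1(1) by (simp add: ctransp_mult)
  also have "\<dots> = B ** ctransp (M ** B) ** ctransp (M ** C)" by (simp add: ctransp_mult matrix_mul_assoc)
  also have "\<dots> = B ** (M ** B) ** (M ** C)" using a1(3) b1(3) by simp
  also have "\<dots> = B ** M ** C" using a1(2) by (simp add: matrix_mul_assoc)
  finally have 1: "B = B ** M ** C" .
  have "C = (C ** M) ** C" using b1(2) by (simp add: matrix_mul_assoc)
  also have "\<dots> = ctransp (C ** M) ** C" using b1(4) by simp
  also have "\<dots> = ctransp (M ** B ** M) ** ctransp C ** C" using a1(1) by (simp add: ctransp_mult)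
  also have "\<dots> = ctransp (B ** M) ** ctransp (C ** M) ** C" by (simp add: ctransp_mult matrix_mul_assoc)
  also have "\<dots> = (B ** M) ** (C ** M) ** C" using a1(4) b1(4) by simp
  also have "\<dots> = B ** M ** C" using b1(2) by (metis matrix_mul_assoc)
  finally show ?thesis using 1 by simp
qed

lemma pinv_eq: "is_pinv M B \<Longrightarrow> pinv M = B"
  unfolding pinv_def using pinv_unique by blast

lemma pinv_formula:
  fixes B :: "complex^'c^'r"
  assumes inv: "invertible (B ** ctransp B)"
  shows "pinv B = ctransp B ** matrix_inv (B ** ctransp B)"
proof (rule pinv_eq)
  let ?Q = "B ** ctransp B" let ?R = "matrix_inv ?Q"
  have QR: "?Q ** ?R = mat 1" and RQ: "?R ** ?Q = mat 1" using matrix_inv_both[OF inv] by auto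
  have hQ: "ctransp ?Q = ?Q" by (simp add: ctransp_mult)
  have hR: "ctransp ?R = ?R" using hermitian_inv[OF inv hQ] .
  have 1: "B ** (ctransp B ** ?R) ** B = B"
    by (metis QR matrix_mul_assoc matrix_mul_lid)
  have 2: "ctransp B ** ?R ** B ** (ctransp B ** ?R) = ctransp B ** ?R"
    by (metis RQ matrix_mul_assoc matrix_mul_rid)
  have 3: "ctransp (B ** (ctransp B ** ?R)) = B ** (ctransp B ** ?R)"
    by (metis QR ctransp_mat1 matrix_mul_assoc)
  have 4: "ctransp (ctransp B ** ?R ** B) = ctransp B ** ?R ** B"
    by (simp add: ctransp_mult hR matrix_mul_assoc)
  show "is_pinv B (ctransp B ** ?R)"
    unfolding is_pinv_def using 1 2 3 4 by (simp add: matrix_mul_assoc)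
qed


lemma mpow_scale: "mpow (t *\<^sub>R H) k = (t^k) *\<^sub>R mpow H k"
  by (induction k) (simp_all add: matrix_scalar_ac scalar_matrix_assoc[symmetric])

lemma mpow_add: "mpow H (a + b) = mpow H a ** mpow H b"
  by (induction a) (simp_all add: matrix_mul_assoc)

lemma mpow_comm: "H ** mpow H k = mpow H k ** H"
proof -
  have "mpow H (k + 1) = mpow H (1 + k)" by simp
  then show ?thesis by (simp only: mpow_add) simp
qed

lemma mpow_Suc': "mpow H (Suc k) = mpow H k ** H"
  using mpow_comm by simp

lemma ctransp_mpow: "ctransp (mpow H k) = mpow (ctransp H) k"
  by (induction k) (simp_all add: ctransp_mult mpow_comm)

definition cH :: "complex^'n^'n \<Rightarrow> real" where
  "cH H = (\<Sum>i\<in>UNIV. \<Sum>j\<in>UNIV. cmod (H $ i $ j))"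

lemma cH_nonneg: "cH H \<ge> 0" unfolding cH_def by (simp add: sum_nonneg)

lemma row_le_cH: "(\<Sum>l\<in>UNIV. cmod (H $ i $ l)) \<le> cH H"
  unfolding cH_def by (rule member_le_sum[where f="\<lambda>i. \<Sum>j\<in>UNIV. cmod (H $ i $ j)"]) (auto intro: sum_nonneg)

lemma mpow_bound: "cmod (mpow H k $ i $ j) \<le> (cH H)^k"
proof (induction k arbitrary: i j)
  case 0
  then show ?case by (simp add: mat_def)
next
  case (Suc k)
  have "cmod (mpow H (Suc k) $ i $ j) = cmod (\<Sum>l\<in>UNIV. H $ i $ l * mpow H k $ l $ j)"
    by (simp add: matrix_matrix_mult_def)
  also have "\<dots> \<le> (\<Sum>l\<in>UNIV. cmod (H $ i $ l) * cmod (mpow H k $ l $ j))"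
    by (rule order_trans[OF norm_sum]) (simp add: norm_mult)
  also have "\<dots> \<le> (\<Sum>l\<in>UNIV. cmod (H $ i $ l) * (cH H)^k)"
    by (rule sum_mono) (simp add: Suc.IH mult_left_mono)
  also have "\<dots> = (\<Sum>l\<in>UNIV. cmod (H $ i $ l)) * (cH H)^k"
    by (simp add: sum_distrib_right)
  also have "\<dots> \<le> cH H * (cH H)^k"
    by (rule mult_right_mono[OF row_le_cH]) (simp add: cH_nonneg)
  finally show ?case by simp
qed

lemma mat_sums:
  fixes f :: "nat \<Rightarrow> 'a::real_normed_vector^'n^'m"
  assumes "\<And>i j. (\<lambda>k. f k $ i $ j) sums (L $ i $ j)"
  shows "f sums L"
  unfolding sums_def
  apply (rule vec_tendstoI)
  apply (rule vec_tendstoI)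
  using assms unfolding sums_def by simp

definition ecoef :: "complex^'n^'n \<Rightarrow> 'n \<Rightarrow> 'n \<Rightarrow> nat \<Rightarrow> complex" where
  "ecoef H i j k = mpow H k $ i $ j / fact k"

lemma ecoef_summable_norm: "summable (\<lambda>k. norm (ecoef H i j k * z^k))"
proof (rule summable_comparison_test)
  show "summable (\<lambda>k. inverse (fact k) * (cH H * norm z)^k)"
    by (rule summable_exp)
  show "\<exists>N. \<forall>n\<ge>N. norm (norm (ecoef H i j n * z ^ n)) \<le> inverse (fact n) * (cH H * cmod z) ^ n"
  proof (intro exI allI impI)
    fix n :: nat
    have "norm (norm (ecoef H i j n * z ^ n)) = cmod (mpow H n $ i $ j) * cmod z ^ n / fact n"
      by (simp add: ecoef_def norm_mult norm_divide norm_power)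
    also have "\<dots> \<le> (cH H)^n * cmod z ^ n / fact n"
      by (intro divide_right_mono mult_right_mono mpow_bound) auto
    also have "\<dots> = inverse (fact n) * (cH H * cmod z) ^ n"
      by (simp add: power_mult_distrib divide_inverse mult_ac)
    finally show "norm (norm (ecoef H i j n * z ^ n)) \<le> inverse (fact n) * (cH H * cmod z) ^ n" .
  qed
qed

lemma ecoef_summable: "summable (\<lambda>k. ecoef H i j k * z^k)"
  by (rule summable_norm_cancel[OF ecoef_summable_norm])

definition ent :: "complex^'n^'n \<Rightarrow> 'n \<Rightarrow> 'n \<Rightarrow> complex \<Rightarrow> complex" where
  "ent H i j z = (\<Sum>k. ecoef H i j k * z^k)"

lemma mexp_term_entry:
  "(1 / fact k) *\<^sub>R (mpow (t *\<^sub>R H) k $ i $ j) = ecoef H i j k * (complex_of_real t)^k"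
  unfolding mpow_scale vector_scaleR_component by (simp add: ecoef_def scaleR_conv_of_real divide_inverse mult.commute)

lemma mexp_sums: "(\<lambda>k. (1 / fact k) *\<^sub>R mpow (t *\<^sub>R H) k) sums (\<chi> i j. ent H i j (of_real t))"
  by (rule mat_sums) (simp add: mexp_term_entry ent_def summable_sums[OF ecoef_summable])

lemma mexp_eq: "mexp (t *\<^sub>R H) = (\<chi> i j. ent H i j (of_real t))"
  unfolding mexp_def by (rule sums_unique[OF mexp_sums, symmetric])

lemma mexp_entry: "mexp (t *\<^sub>R H) $ i $ j = ent H i j (of_real t)"
  by (simp add: mexp_eq)

lemma binom_fact_sum:
  fixes z w :: complex
  shows "(\<Sum>a\<le>n. z^a * w^(n-a) / (fact a * fact (n-a))) = (z + w)^n / fact n"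
proof -
  have "(z + w)^n = (\<Sum>a\<le>n. of_nat (n choose a) * z^a * w^(n-a))"
    by (rule binomial_ring)
  also have "\<dots> = (\<Sum>a\<le>n. fact n * (z^a * w^(n-a) / (fact a * fact (n-a))))"
    by (rule sum.cong) (simp_all add: binomial_fact)
  also have "\<dots> = fact n * (\<Sum>a\<le>n. z^a * w^(n-a) / (fact a * fact (n-a)))"
    by (simp add: sum_distrib_left)
  finally show ?thesis by simp
qed

lemma ent_prod_term:
  assumes "a \<le> n"
  shows "(\<Sum>l\<in>UNIV. (ecoef H i l a * z^a) * (ecoef H l j (n-a) * w^(n-a)))
     = z^a * w^(n-a) / (fact a * fact (n-a)) * mpow H n $ i $ j"
proof -
  have "mpow H n = mpow H a ** mpow H (n-a)"
    using assms mpow_add[of H a "n-a"] by simp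
  then have "mpow H n $ i $ j = (\<Sum>l\<in>UNIV. mpow H a $ i $ l * mpow H (n-a) $ l $ j)"
    by (simp add: matrix_matrix_mult_def)
  then show ?thesis
    by (simp add: ecoef_def sum_distrib_left sum_distrib_right field_simps)
qed

lemma ent_cauchy: "(\<lambda>n. \<Sum>a\<le>n. (ecoef H i l a * z^a) * (ecoef H l j (n-a) * w^(n-a))) sums (ent H i l z * ent H l j w)"
  unfolding ent_def by (rule Cauchy_product_sums[OF ecoef_summable_norm ecoef_summable_norm])

lemma ent_add: "(\<Sum>l\<in>UNIV. ent H i l z * ent H l j w) = ent H i j (z + w)"
proof -
  have "(\<lambda>n. \<Sum>l\<in>UNIV. \<Sum>a\<le>n. (ecoef H i l a * z^a) * (ecoef H l j (n-a) * w^(n-a)))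
     sums (\<Sum>l\<in>UNIV. ent H i l z * ent H l j w)"
    by (rule sums_sum) (rule ent_cauchy)
  moreover have eq: "(\<Sum>l\<in>UNIV. \<Sum>a\<le>n. (ecoef H i l a * z^a) * (ecoef H l j (n-a) * w^(n-a)))
      = ecoef H i j n * (z + w)^n" for n
  proof -
    have "(\<Sum>l\<in>UNIV. \<Sum>a\<le>n. (ecoef H i l a * z^a) * (ecoef H l j (n-a) * w^(n-a)))
        = (\<Sum>a\<le>n. \<Sum>l\<in>UNIV. (ecoef H i l a * z^a) * (ecoef H l j (n-a) * w^(n-a)))"
      by (rule sum.swap)
    also have "\<dots> = (\<Sum>a\<le>n. z^a * w^(n-a) / (fact a * fact (n-a)) * mpow H n $ i $ j)"
      by (rule sum.cong) (simp_all add: ent_prod_term)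
    also have "\<dots> = (\<Sum>a\<le>n. z^a * w^(n-a) / (fact a * fact (n-a))) * mpow H n $ i $ j"
      by (simp add: sum_distrib_right)
    also have "\<dots> = ecoef H i j n * (z + w)^n"
      by (simp add: binom_fact_sum ecoef_def)
    finally show ?thesis .
  qed
  ultimately have "(\<lambda>n. ecoef H i j n * (z + w)^n) sums (\<Sum>l\<in>UNIV. ent H i l z * ent H l j w)"
    by (simp only: eq)
  then show ?thesis unfolding ent_def by (rule sums_unique)
qed

lemma ent_zero: "ent H i j 0 = (if i = j then 1 else 0)"
  unfolding ent_def using powser_zero[of "ecoef H i j"] by (simp add: ecoef_def mat_def)

lemma mexp_add: "mexp (s *\<^sub>R H) ** mexp (t *\<^sub>R H) = mexp ((s + t) *\<^sub>R H)"
  unfolding mexp_eq matrix_matrix_mult_def by (simp add: ent_add)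

lemma mexp_zero: "mexp (0 *\<^sub>R H) = mat 1"
  unfolding mexp_eq by (simp add: vec_eq_iff ent_zero mat_def)

lemma mexp_inv: "mexp (t *\<^sub>R H) ** mexp ((-t) *\<^sub>R H) = mat 1"
  using mexp_add[of t H "-t"] mexp_zero[of H] by (metis add.right_inverse)

lemma mexp_invertible: "invertible (mexp (t *\<^sub>R H))"
  using matrix_inv_unique(2)[OF mexp_inv] .

lemma mexp_double: "mexp (t *\<^sub>R H) ** mexp (t *\<^sub>R H) = mexp ((2*t) *\<^sub>R H)"
  using mexp_add[of t H t] by (metis mult_2)

lemma ecoef_cnj:
  assumes "hermitian H"
  shows "cnj (ecoef H j i k) = ecoef H i j k"
proof -
  have "ctransp (mpow H k) = mpow H k" using assms by (simp add: ctransp_mpow hermitian_def)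
  then have "cnj (mpow H k $ j $ i) = mpow H k $ i $ j" by (metis ctransp_nth)
  then show ?thesis by (simp add: ecoef_def)
qed

lemma mexp_hermitian:
  assumes "hermitian H"
  shows "ctransp (mexp (t *\<^sub>R H)) = mexp (t *\<^sub>R H)"
proof -
  have "cnj (ent H j i (of_real t)) = ent H i j (of_real t)" for i j
  proof -
    have "(\<lambda>k. ecoef H j i k * (of_real t)^k) sums ent H j i (of_real t)"
      unfolding ent_def by (rule summable_sums[OF ecoef_summable])
    then have "(\<lambda>k. cnj (ecoef H j i k * (of_real t)^k)) sums cnj (ent H j i (of_real t))"
      by (simp only: sums_cnj)
    then have "(\<lambda>k. ecoef H i j k * (of_real t)^k) sums cnj (ent H j i (of_real t))"
      by (simp add: ecoef_cnj[OF assms])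
    then show ?thesis unfolding ent_def by (rule sums_unique)
  qed
  then show ?thesis by (simp add: vec_eq_iff mexp_entry)
qed


section \<open>Trace power series\<close>

lemma Re_ofreal_mult: "Re (complex_of_real a * z) = a * Re z" by simp

definition tc :: "complex^'n^'n \<Rightarrow> complex^'n^'n \<Rightarrow> nat \<Rightarrow> real" where
  "tc H M k = Re (trace (mpow H k ** M)) / fact k"

definition fM :: "complex^'n^'n \<Rightarrow> complex^'n^'n \<Rightarrow> real \<Rightarrow> real" where
  "fM H M t = Re (trace (mexp (t *\<^sub>R H) ** M))"

lemma trace_sums: "(\<lambda>k. tc H M k * t^k) sums fM H M t"
proof -
  have "(\<lambda>k. \<Sum>i\<in>UNIV. \<Sum>l\<in>UNIV. ecoef H i l k * (of_real t)^k * M $ l $ i)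
        sums (\<Sum>i\<in>UNIV. \<Sum>l\<in>UNIV. ent H i l (of_real t) * M $ l $ i)"
    unfolding ent_def
    by (intro sums_sum sums_mult2 summable_sums ecoef_summable)
  moreover have "(\<Sum>i\<in>UNIV. \<Sum>l\<in>UNIV. ecoef H i l k * (of_real t)^k * M $ l $ i)
      = of_real (t^k / fact k) * trace (mpow H k ** M)" for k
    by (simp add: ecoef_def trace_def matrix_matrix_mult_def sum_distrib_left field_simps)
  moreover have "(\<Sum>i\<in>UNIV. \<Sum>l\<in>UNIV. ent H i l (of_real t) * M $ l $ i)
      = trace (mexp (t *\<^sub>R H) ** M)"
    by (simp add: mexp_entry trace_def matrix_matrix_mult_def)
  ultimately have "(\<lambda>k. of_real (t^k / fact k) * trace (mpow H k ** M)) sums trace (mexp (t *\<^sub>R H) ** M)"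
    by simp
  from sums_Re[OF this] have "(\<lambda>k. (t^k / fact k) * Re (trace (mpow H k ** M))) sums fM H M t"
    unfolding fM_def by (simp only: Re_ofreal_mult)
  moreover have "(\<lambda>k. (t^k / fact k) * Re (trace (mpow H k ** M))) = (\<lambda>k. tc H M k * t^k)"
    by (simp add: tc_def fun_eq_iff)
  ultimately show ?thesis by simp
qed

lemma fM_eq: "fM H M = (\<lambda>t. \<Sum>k. tc H M k * t^k)"
  using trace_sums sums_unique by (metis ext)

lemma diffs_tc: "diffs (tc H M) = tc H (H ** M)"
proof
  fix n
  have "mpow H (Suc n) ** M = mpow H n ** (H ** M)"
    by (simp add: mpow_comm matrix_mul_assoc)
  moreover have "(fact (Suc n)::real) = of_nat (Suc n) * fact n" by simp
  ultimately show "diffs (tc H M) n = tc H (H ** M) n"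
    unfolding diffs_def tc_def by (simp del: fact_Suc of_nat_Suc)
qed

lemma fM_deriv: "(fM H M has_real_derivative fM H (H ** M) t) (at t)"
proof -
  have "((\<lambda>x. \<Sum>k. tc H M k * x^k) has_real_derivative (\<Sum>k. diffs (tc H M) k * t^k)) (at t)"
    by (rule termdiffs_strong_converges_everywhere) (rule sums_summable[OF trace_sums])
  then show ?thesis
    by (simp add: diffs_tc fM_eq)
qed

lemma fM_zero: "fM H M 0 = Re (trace M)"
  unfolding fM_def using mexp_zero[of H] by simp

section \<open>Jacobi formula at the identity\<close>

lemma ent_deriv: "(ent H i j has_field_derivative (\<Sum>k. diffs (ecoef H i j) k * z^k)) (at z)"
  unfolding ent_def
  by (rule termdiffs_strong_converges_everywhere) (rule ecoef_summable)

lemma ent_deriv0: "(ent H i j has_field_derivative H $ i $ j) (at 0)"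
proof -
  have "(\<Sum>k. diffs (ecoef H i j) k * 0^k) = H $ i $ j"
    by (simp add: diffs_def ecoef_def)
  then show ?thesis using ent_deriv[of H i j 0] by simp
qed

lemma prod_delta_zero:
  fixes p :: "'n::finite \<Rightarrow> 'n"
  assumes p: "p permutes UNIV" and np: "p \<noteq> id"
  shows "(\<Prod>y\<in>UNIV - {x}. (if y = p y then 1 else 0 :: complex)) = 0"
proof -
  obtain a where a: "p a \<noteq> a" using np by (metis eq_id_iff)
  have "\<exists>y. y \<noteq> x \<and> p y \<noteq> y"
  proof (cases "a = x")
    case True
    have "p (p a) \<noteq> p a" using a permutes_inj[OF p] by (metis injD)
    then show ?thesis using a True by metis
  next
    case False then show ?thesis using a by blast
  qed
  then obtain y where "y \<noteq> x" "p y \<noteq> y" by blast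
  then show ?thesis
    by (intro prod_zero) (auto intro!: bexI[of _ y])
qed

lemma det_ent_deriv0:
  fixes H :: "complex^'n^'n"
  shows "((\<lambda>z. det (\<chi> i j. ent H i j z)) has_field_derivative trace H) (at 0)"
proof -
  let ?S = "{p. p permutes (UNIV :: 'n set)}"
  have d: "((\<lambda>z. det (\<chi> i j. ent H i j z)) has_field_derivative
     (\<Sum>p\<in>?S. of_int (sign p) * (\<Sum>x\<in>UNIV. H $ x $ p x * (\<Prod>y\<in>UNIV-{x}. ent H y (p y) 0)))) (at 0)"
    unfolding det_def
    by (auto intro!: DERIV_sum DERIV_cmult has_field_derivative_prod ent_deriv0)
  have e0: "ent H y (p y) 0 = (if y = p y then 1 else 0)" for y p
    by (simp add: ent_zero)
  have "(\<Sum>p\<in>?S. of_int (sign p) * (\<Sum>x\<in>UNIV. H $ x $ p x * (\<Prod>y\<in>UNIV-{x}. ent H y (p y) 0)))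
      = (\<Sum>p\<in>?S. if p = id then trace H else 0)"
  proof (intro sum.cong refl)
    fix p assume "p \<in> ?S"
    then have p: "p permutes UNIV" by simp
    show "of_int (sign p) * (\<Sum>x\<in>UNIV. H $ x $ p x * (\<Prod>y\<in>UNIV-{x}. ent H y (p y) 0))
        = (if p = id then trace H else 0)"
    proof (cases "p = id")
      case True
      then show ?thesis by (simp add: ent_zero sign_id trace_def)
    next
      case False
      then show ?thesis by (simp add: e0 prod_delta_zero[OF p False])
    qed
  qed
  also have "\<dots> = trace H"
    by (simp add: sum.delta' permutes_id)
  finally show ?thesis using d by simp
qed

lemma trace_zero_if_det:
  assumes "\<And>t. det (mexp (t *\<^sub>R H)) = 1"
  shows "trace H = 0"
proof -
  have "((\<lambda>z. det (\<chi> i j. ent H i j z)) has_field_derivative trace H) (at (of_real 0))"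
    using det_ent_deriv0 by simp
  from has_vector_derivative_real_field[OF this]
  have "((\<lambda>t. det (\<chi> i j. ent H i j (of_real t))) has_vector_derivative trace H) (at 0)" .
  moreover have "(\<lambda>t. det (\<chi> i j. ent H i j (of_real t))) = (\<lambda>t. 1)"
    using assms by (simp add: mexp_eq)
  ultimately have "((\<lambda>t::real. 1::complex) has_vector_derivative trace H) (at 0)" by simp
  moreover have "((\<lambda>t::real. 1::complex) has_vector_derivative 0) (at 0)"
    by (rule has_vector_derivative_const)
  ultimately show ?thesis using vector_derivative_unique_at by blast
qed


section \<open>Rank and invertibility\<close>

lemma rank_full_right_inv:
  fixes A :: "complex^'n^'m"
  assumes rk: "rank A = CARD('m)"
  shows "\<exists>R. A ** R = mat 1"
proof -
  have "\<forall>c. (\<Sum>i\<in>UNIV. c i *s row i A) = 0 \<longrightarrow> (\<forall>i. c i = 0)"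
  proof (intro allI impI)
    fix c :: "'m \<Rightarrow> complex" and k :: 'm
    assume s: "(\<Sum>i\<in>UNIV. c i *s row i A) = 0"
    show "c k = 0"
    proof (rule ccontr)
    assume ck: "c k \<noteq> 0"
    let ?W = "(\<lambda>i. row i A) ` (UNIV - {k})"
    let ?S' = "(\<Sum>i\<in>UNIV - {k}. c i *s row i A)"
    have "(\<Sum>i\<in>UNIV. c i *s row i A) = c k *s row k A + ?S'"
      by (simp add: sum.remove)
    then have "c k *s row k A + ?S' = 0" using s by simp
    then have e1: "c k *s row k A = - ?S'" by (simp add: eq_neg_iff_add_eq_0)
    have "row k A = inverse (c k) *s (c k *s row k A)"
      using ck by (simp add: vector_smult_assoc)
    then have e2: "row k A = inverse (c k) *s (- ?S')" using e1 by simp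
    have "?S' \<in> vec.span ?W"
      by (intro vec.span_sum vec.span_scale vec.span_base) auto
    then have rk_in: "row k A \<in> vec.span ?W"
      unfolding e2 by (intro vec.span_scale vec.span_neg)
    have "rows A \<subseteq> vec.span ?W"
    proof
      fix r assume "r \<in> rows A"
      then obtain i where r: "r = row i A" unfolding rows_def by blast
      show "r \<in> vec.span ?W"
      proof (cases "i = k")
        case True then show ?thesis using rk_in r by simp
      next
        case False then show ?thesis using r by (intro vec.span_base) auto
      qed
    qed
    then have "vec.dim (rows A) \<le> card ?W"
      by (rule vec.dim_le_card) simp
    also have "\<dots> \<le> card (UNIV - {k} :: 'm set)"
      by (rule card_image_le) simp
    also have "\<dots> < CARD('m)"
      by (simp add: card_Diff_singleton)
    finally have "vec.dim (rows A) < CARD('m)" .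
    then show False using rk unfolding row_rank_def_gen by linarith
  qed
  qed
  then show ?thesis using matrix_right_invertible_independent_rows by blast
qed

lemma cnj_quad_zero:
  fixes A :: "complex^'n^'m" and w :: "complex^'m"
  assumes "(A ** ctransp A) *v w = 0"
  shows "ctransp A *v w = 0"
proof -
  let ?u = "ctransp A *v w"
  have au: "(A ** ctransp A) *v w = A *v ?u" by (simp add: matrix_vector_mul_assoc)
  have "0 = (\<Sum>i\<in>UNIV. cnj (w $ i) * ((A ** ctransp A) *v w) $ i)" using assms by simp
  also have "\<dots> = (\<Sum>i\<in>UNIV. cnj (w $ i) * (\<Sum>j\<in>UNIV. A $ i $ j * ?u $ j))"
    unfolding au by (simp add: matrix_vector_mult_def)
  also have "\<dots> = (\<Sum>i\<in>UNIV. \<Sum>j\<in>UNIV. cnj (w $ i) * A $ i $ j * ?u $ j)"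
    by (simp add: sum_distrib_left mult.assoc)
  also have "\<dots> = (\<Sum>j\<in>UNIV. \<Sum>i\<in>UNIV. cnj (w $ i) * A $ i $ j * ?u $ j)"
    by (rule sum.swap)
  also have "\<dots> = (\<Sum>j\<in>UNIV. ?u $ j * (\<Sum>i\<in>UNIV. A $ i $ j * cnj (w $ i)))"
    by (simp add: sum_distrib_left mult_ac)
  also have "\<dots> = (\<Sum>j\<in>UNIV. ?u $ j * cnj (?u $ j))"
    by (simp add: matrix_vector_mult_def)
  also have "\<dots> = of_real (\<Sum>j\<in>UNIV. (cmod (?u $ j))\<^sup>2)"
    by (simp only: of_real_sum complex_norm_square)
  finally have h0: "0 = complex_of_real (\<Sum>j\<in>UNIV. (cmod (?u $ j))\<^sup>2)" .
  have "(\<Sum>j\<in>UNIV. (cmod (?u $ j))\<^sup>2) = 0" using h0 by (metis of_real_eq_0_iff)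
  then have "\<forall>j\<in>UNIV. (cmod (?u $ j))\<^sup>2 = 0"
    by (subst (asm) sum_nonneg_eq_0_iff) auto
  then show ?thesis by (simp add: vec_eq_iff)
qed

lemma gram_invertible:
  fixes A :: "complex^'n^'m"
  assumes "\<exists>R. A ** R = mat 1"
  shows "invertible (A ** ctransp A)"
proof -
  obtain R where R: "A ** R = mat 1" using assms by blast
  have RA: "ctransp R ** ctransp A = mat 1" using R by (metis ctransp_mat1 ctransp_mult)
  have "\<forall>w. (A ** ctransp A) *v w = 0 \<longrightarrow> w = 0"
  proof (intro allI impI)
    fix w assume "(A ** ctransp A) *v w = 0"
    then have "ctransp A *v w = 0" by (rule cnj_quad_zero)
    then have "(ctransp R ** ctransp A) *v w = 0"
      by (simp add: matrix_vector_mul_assoc[symmetric])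
    then show "w = 0" using RA by simp
  qed
  then have "\<exists>B. B ** (A ** ctransp A) = mat 1"
    using matrix_left_invertible_ker by blast
  then show ?thesis using invertible_left_inverse by blast
qed

section \<open>Frobenius inequalities\<close>

lemma cs_complex:
  fixes x y :: "'i \<Rightarrow> complex"
  shows "(cmod (\<Sum>l\<in>I. x l * y l))\<^sup>2 \<le> (\<Sum>l\<in>I. (cmod (x l))\<^sup>2) * (\<Sum>l\<in>I. (cmod (y l))\<^sup>2)"
proof -
  have "cmod (\<Sum>l\<in>I. x l * y l) \<le> (\<Sum>l\<in>I. cmod (x l) * cmod (y l))"
    by (rule order_trans[OF norm_sum]) (simp add: norm_mult)
  then have "(cmod (\<Sum>l\<in>I. x l * y l))\<^sup>2 \<le> (\<Sum>l\<in>I. cmod (x l) * cmod (y l))\<^sup>2"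
    by (simp add: power_mono)
  also have "\<dots> \<le> (\<Sum>l\<in>I. (cmod (x l))\<^sup>2) * (\<Sum>l\<in>I. (cmod (y l))\<^sup>2)"
    by (rule Cauchy_Schwarz_ineq_sum)
  finally show ?thesis .
qed

lemma frob_sq_sum: "(frob M)\<^sup>2 = (\<Sum>i\<in>UNIV. \<Sum>j\<in>UNIV. (cmod (M $ i $ j))\<^sup>2)"
  unfolding frob_def by (simp add: sum_nonneg)

lemma frob_mult_le:
  fixes U :: "complex^'l^'i" and V :: "complex^'j^'l"
  shows "(frob (U ** V))\<^sup>2 \<le> (frob U)\<^sup>2 * (frob V)\<^sup>2"
proof -
  have "(frob (U ** V))\<^sup>2 = (\<Sum>i\<in>UNIV. \<Sum>j\<in>UNIV. (cmod (\<Sum>l\<in>UNIV. U $ i $ l * V $ l $ j))\<^sup>2)"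
    by (simp add: frob_sq_sum matrix_matrix_mult_def)
  also have "\<dots> \<le> (\<Sum>i\<in>UNIV. \<Sum>j\<in>UNIV. (\<Sum>l\<in>UNIV. (cmod (U $ i $ l))\<^sup>2) * (\<Sum>l\<in>UNIV. (cmod (V $ l $ j))\<^sup>2))"
    by (intro sum_mono cs_complex)
  also have "\<dots> = (\<Sum>i\<in>UNIV. \<Sum>l\<in>UNIV. (cmod (U $ i $ l))\<^sup>2) * (\<Sum>j\<in>UNIV. \<Sum>l\<in>UNIV. (cmod (V $ l $ j))\<^sup>2)"
    by (simp add: sum_product)
  also have "(\<Sum>j\<in>UNIV. \<Sum>l\<in>UNIV. (cmod (V $ l $ j))\<^sup>2) = (frob V)\<^sup>2"
    unfolding frob_sq_sum by (rule sum.swap)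
  finally show ?thesis by (simp add: frob_sq_sum)
qed

lemma frob_cs:
  fixes U V :: "complex^'j^'i"
  shows "(Re (trace (ctransp U ** V)))\<^sup>2 \<le> (frob U)\<^sup>2 * (frob V)\<^sup>2"
proof -
  have "Re (trace (ctransp U ** V)) = (\<Sum>j\<in>UNIV. \<Sum>i\<in>UNIV. Re (cnj (U $ i $ j) * V $ i $ j))"
    by (simp add: trace_def matrix_matrix_mult_def Re_sum)
  also have "\<dots> = (\<Sum>p\<in>UNIV \<times> UNIV. Re (cnj (U $ snd p $ fst p) * V $ snd p $ fst p))"
    by (simp add: sum.cartesian_product case_prod_beta)
  finally have e: "Re (trace (ctransp U ** V)) = (\<Sum>p\<in>UNIV \<times> UNIV. Re (cnj (U $ snd p $ fst p) * V $ snd p $ fst p))" .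
  have "\<bar>Re (trace (ctransp U ** V))\<bar> \<le> (\<Sum>p\<in>UNIV \<times> UNIV. cmod (U $ snd p $ fst p) * cmod (V $ snd p $ fst p))"
    unfolding e
  proof (rule order_trans[OF sum_abs], rule sum_mono)
    fix p :: "'j \<times> 'i"
    show "\<bar>Re (cnj (U $ snd p $ fst p) * V $ snd p $ fst p)\<bar> \<le> cmod (U $ snd p $ fst p) * cmod (V $ snd p $ fst p)"
      using abs_Re_le_cmod[of "cnj (U $ snd p $ fst p) * V $ snd p $ fst p"] by (simp add: norm_mult)
  qed
  then have "\<bar>Re (trace (ctransp U ** V))\<bar>\<^sup>2 \<le> (\<Sum>p\<in>UNIV \<times> UNIV. cmod (U $ snd p $ fst p) * cmod (V $ snd p $ fst p))\<^sup>2"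
    by (rule power_mono) simp
  then have "(Re (trace (ctransp U ** V)))\<^sup>2 \<le> (\<Sum>p\<in>UNIV \<times> UNIV. cmod (U $ snd p $ fst p) * cmod (V $ snd p $ fst p))\<^sup>2"
    by simp
  also have "\<dots> \<le> (\<Sum>p\<in>UNIV \<times> UNIV. (cmod (U $ snd p $ fst p))\<^sup>2) * (\<Sum>p\<in>UNIV \<times> UNIV. (cmod (V $ snd p $ fst p))\<^sup>2)"
    by (rule Cauchy_Schwarz_ineq_sum)
  also have "\<dots> = (frob U)\<^sup>2 * (frob V)\<^sup>2"
  proof -
    have "(\<Sum>p\<in>UNIV \<times> UNIV. (cmod (M $ snd p $ fst p))\<^sup>2) = (frob M)\<^sup>2" for M :: "complex^'j^'i"
    proof -
      have "(\<Sum>p\<in>UNIV \<times> UNIV. (cmod (M $ snd p $ fst p))\<^sup>2) = (\<Sum>j\<in>UNIV. \<Sum>i\<in>UNIV. (cmod (M $ i $ j))\<^sup>2)"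
        by (simp add: sum.cartesian_product case_prod_beta)
      also have "\<dots> = (frob M)\<^sup>2" unfolding frob_sq_sum by (rule sum.swap)
      finally show ?thesis .
    qed
    then show ?thesis by simp
  qed
  finally show ?thesis .
qed

lemma frob_herm: "ctransp Y = Y \<Longrightarrow> (frob Y)\<^sup>2 = Re (trace (Y ** Y))"
  by (metis frob_sq)

lemma key_ineq:
  fixes B :: "complex^'n^'m" and Y :: "complex^'m^'m"
  assumes inv: "invertible (B ** ctransp B)" and hY: "ctransp Y = Y"
  shows "Re (trace (Y ** Y)) \<le> Re (trace (matrix_inv (B ** ctransp B))) * Re (trace (Y ** (B ** ctransp B) ** Y))"
proof -
  let ?P = "B ** ctransp B" let ?R = "matrix_inv ?P"
  have PR: "?P ** ?R = mat 1" and RP: "?R ** ?P = mat 1" using matrix_inv_both[OF inv] by auto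
  have hP: "ctransp ?P = ?P" by (simp add: ctransp_mult)
  have hR: "ctransp ?R = ?R" using hermitian_inv[OF inv hP] .
  have PR': "X ** B ** ctransp B ** ?R = X" for X :: "complex^'m^'k"
    by (metis PR matrix_mul_assoc matrix_mul_rid)
  have RP': "X ** ?R ** B ** ctransp B = X" for X :: "complex^'m^'k"
    by (metis RP matrix_mul_assoc matrix_mul_rid)
  have RP0: "?R ** B ** ctransp B = mat 1" using RP by (simp add: matrix_mul_assoc)
  define U where "U = ctransp B ** Y"
  define V where "V = ctransp B ** ?R ** Y"
  have UV: "ctransp U ** V = Y ** Y"
    by (simp add: U_def V_def ctransp_mult hY matrix_mul_assoc PR')
  have fU: "(frob U)\<^sup>2 = Re (trace (Y ** ?P ** Y))"
    unfolding frob_sq' by (simp add: U_def ctransp_mult hY matrix_mul_assoc)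
  have fV: "(frob V)\<^sup>2 = Re (trace (Y ** ?R ** Y))"
    unfolding frob_sq' by (simp add: V_def ctransp_mult hY hR matrix_mul_assoc RP')
  have cs: "(Re (trace (Y ** Y)))\<^sup>2 \<le> Re (trace (Y ** ?P ** Y)) * Re (trace (Y ** ?R ** Y))"
    using frob_cs[of U V] unfolding UV fU fV .
  define D where "D = ?R ** B"
  have fD: "(frob (ctransp D ** Y))\<^sup>2 = Re (trace (Y ** ?R ** Y))"
    unfolding frob_sq' by (simp add: D_def ctransp_mult hY hR matrix_mul_assoc RP')
  have fD2: "(frob (ctransp D))\<^sup>2 = Re (trace ?R)"
    unfolding frob_sq' by (simp add: D_def ctransp_mult hR matrix_mul_assoc RP0)
  have "Re (trace (Y ** ?R ** Y)) \<le> Re (trace ?R) * Re (trace (Y ** Y))"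
    using frob_mult_le[of "ctransp D" Y] unfolding fD fD2 frob_herm[OF hY] .
  define a where "a = Re (trace (Y ** Y))"
  define p where "p = Re (trace (Y ** ?P ** Y))"
  define r where "r = Re (trace ?R)"
  have a0: "a \<ge> 0" unfolding a_def using frob_herm[OF hY] by (metis zero_le_power2)
  have p0: "p \<ge> 0" unfolding p_def using fU by (metis zero_le_power2)
  have r0: "r \<ge> 0" unfolding r_def using fD2 by (metis zero_le_power2)
  have yry: "Re (trace (Y ** ?R ** Y)) \<le> r * a" unfolding r_def a_def by fact
  have "a * a \<le> p * (r * a)"
  proof -
    have "a * a \<le> p * Re (trace (Y ** ?R ** Y))" using cs unfolding a_def p_def by (simp add: power2_eq_square)
    also have "\<dots> \<le> p * (r * a)" using yry p0 by (rule mult_left_mono)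
    finally show ?thesis .
  qed
  then have "a \<le> r * p"
  proof (cases "a = 0")
    case True then show ?thesis using r0 p0 by simp
  next
    case False
    then have "a > 0" using a0 by simp
    moreover have "a * a \<le> (r * p) * a" using \<open>a * a \<le> p * (r * a)\<close> by (simp add: mult_ac)
    ultimately show ?thesis by (meson mult_le_cancel_right_pos)
  qed
  then show ?thesis unfolding a_def r_def p_def by (simp add: matrix_mul_assoc)
qed


lemma mat1_nonzero: "(mat 1 :: complex^'n^'n) \<noteq> 0"
proof
  assume "(mat 1 :: complex^'n^'n) = 0"
  then have "(mat 1 :: complex^'n^'n) $ undefined $ undefined = 0" by simp
  then show False by (simp add: mat_def)
qed

lemma kappa_formula:
  fixes B :: "complex^'c^'r"
  assumes inv: "invertible (B ** ctransp B)"
  shows "Re (trace (B ** ctransp B)) > 0" "Re (trace (matrix_inv (B ** ctransp B))) > 0"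
    "kappaF B = sqrt (Re (trace (B ** ctransp B))) * sqrt (Re (trace (matrix_inv (B ** ctransp B))))"
    "ln (kappaF B) = (ln (Re (trace (B ** ctransp B))) + ln (Re (trace (matrix_inv (B ** ctransp B))))) / 2"
proof -
  let ?Q = "B ** ctransp B" let ?R = "matrix_inv ?Q"
  have QR: "?Q ** ?R = mat 1" and RQ: "?R ** ?Q = mat 1" using matrix_inv_both[OF inv] by auto
  have hQ: "ctransp ?Q = ?Q" by (simp add: ctransp_mult)
  have hR: "ctransp ?R = ?R" using hermitian_inv[OF inv hQ] .
  have RQ0: "?R ** B ** ctransp B = mat 1" using RQ by (simp add: matrix_mul_assoc)
  have pf: "pinv B = ctransp B ** ?R" by (rule pinv_formula[OF inv])
  have fB: "(frob B)\<^sup>2 = Re (trace ?Q)" by (rule frob_sq)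
  have fP: "(frob (pinv B))\<^sup>2 = Re (trace ?R)"
    unfolding frob_sq' pf by (simp add: ctransp_mult hR matrix_mul_assoc RQ0)
  have Bnz: "B \<noteq> 0"
  proof
    assume "B = 0"
    then have "?Q = 0" by simp
    then show False using QR by (metis mat1_nonzero times0_left)
  qed
  have Pnz: "pinv B \<noteq> 0"
  proof
    assume "pinv B = 0"
    then have "ctransp B ** ?R = 0" using pf by simp
    then have "ctransp B ** ?R ** B ** ctransp B = 0" by simp
    then have "ctransp B = 0" using RQ by (simp add: matrix_mul_assoc[symmetric])
    then have "B = 0" by (metis ctransp_ctransp ctransp_scaleR scaleR_zero_left)
    then show False using Bnz by simp
  qed
  show p1: "Re (trace ?Q) > 0" using fB frob_pos[OF Bnz] by (metis zero_less_power2 less_irrefl)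
  show p2: "Re (trace ?R) > 0" using fP frob_pos[OF Pnz] by (metis zero_less_power2 less_irrefl)
  have "frob B = sqrt (Re (trace ?Q))" using fB frob_nonneg by (metis real_sqrt_unique)
  moreover have "frob (pinv B) = sqrt (Re (trace ?R))" using fP frob_nonneg by (metis real_sqrt_unique)
  ultimately show k: "kappaF B = sqrt (Re (trace ?Q)) * sqrt (Re (trace ?R))"
    unfolding kappaF_def by simp
  show "ln (kappaF B) = (ln (Re (trace ?Q)) + ln (Re (trace ?R))) / 2"
    unfolding k using p1 p2 by (simp add: ln_mult ln_sqrt)
qed

lemma flow:
  fixes B0 :: "complex^'n^'m" and H :: "complex^'m^'m"
  assumes hH: "hermitian H" and inv: "invertible (B0 ** ctransp B0)"
  shows "invertible ((mexp (t *\<^sub>R H) ** B0) ** ctransp (mexp (t *\<^sub>R H) ** B0))"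
    "Re (trace ((mexp (t *\<^sub>R H) ** B0) ** ctransp (mexp (t *\<^sub>R H) ** B0))) = fM H (B0 ** ctransp B0) (2*t)"
    "Re (trace (matrix_inv ((mexp (t *\<^sub>R H) ** B0) ** ctransp (mexp (t *\<^sub>R H) ** B0))))
       = fM H (matrix_inv (B0 ** ctransp B0)) (-(2*t))"
proof -
  let ?P = "B0 ** ctransp B0" let ?Pi = "matrix_inv ?P"
  let ?E = "mexp (t *\<^sub>R H)" let ?E' = "mexp ((-t) *\<^sub>R H)"
  have hE: "ctransp ?E = ?E" by (rule mexp_hermitian[OF hH])
  have EE': "?E ** ?E' = mat 1" by (rule mexp_inv)
  have E'E: "?E' ** ?E = mat 1" using mexp_inv[of "-t" H] by simp
  have PPi: "?P ** ?Pi = mat 1" using matrix_inv_both[OF inv] by auto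
  have EE'X: "X ** ?E ** ?E' = X" for X :: "complex^'m^'m"
    by (metis EE' matrix_mul_assoc matrix_mul_rid)
  have PPiX: "X ** B0 ** ctransp B0 ** ?Pi = X" for X :: "complex^'m^'m"
    by (metis PPi matrix_mul_assoc matrix_mul_rid)
  have Q: "(?E ** B0) ** ctransp (?E ** B0) = ?E ** ?P ** ?E"
    by (simp add: ctransp_mult hE matrix_mul_assoc)
  show "invertible ((?E ** B0) ** ctransp (?E ** B0))"
    unfolding Q by (intro invertible_mult inv mexp_invertible)
  have "trace (?E ** ?P ** ?E) = trace (?E ** ?E ** ?P)"
    using trace_mul_sym[of "?E ** ?P" ?E] by (simp add: matrix_mul_assoc)
  also have "\<dots> = trace (mexp ((2*t) *\<^sub>R H) ** ?P)" by (simp add: mexp_double)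
  finally show "Re (trace ((?E ** B0) ** ctransp (?E ** B0))) = fM H ?P (2*t)"
    unfolding Q fM_def by simp
  define F where "F = ?E'"
  have EFX: "X ** ?E ** F = X" for X :: "complex^'m^'m" unfolding F_def by (rule EE'X)
  have EF: "?E ** F = mat 1" unfolding F_def by (rule EE')
  have "(?E ** ?P ** ?E) ** (F ** ?Pi ** F) = mat 1"
    by (simp add: matrix_mul_assoc EFX PPiX EF)
  then have mi: "matrix_inv (?E ** ?P ** ?E) = ?E' ** ?Pi ** ?E'" unfolding F_def by (rule matrix_inv_unique)
  have "trace (?E' ** ?Pi ** ?E') = trace (?E' ** ?E' ** ?Pi)"
    using trace_mul_sym[of "?E' ** ?Pi" ?E'] by (simp add: matrix_mul_assoc)
  also have "\<dots> = trace (mexp ((-(2*t)) *\<^sub>R H) ** ?Pi)" using mexp_double[of "-t" H] by simp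
  finally show "Re (trace (matrix_inv ((?E ** B0) ** ctransp (?E ** B0)))) = fM H ?Pi (-(2*t))"
    unfolding Q mi fM_def by simp
qed

lemma d_lin:
  assumes "\<And>t. (f has_real_derivative f' t) (at t)"
  shows "((\<lambda>t. f (c * t)) has_real_derivative c * f' (c * t)) (at t)"
proof -
  have "((\<lambda>t. f (c * t)) has_real_derivative f' (c * t) * c) (at t)"
    by (rule DERIV_chain2[OF assms]) simp
  then show ?thesis by (simp add: mult.commute)
qed

lemma d_ln_lin:
  assumes "\<And>t. (f has_real_derivative f' t) (at t)" "\<And>t. f t > 0"
  shows "((\<lambda>t. ln (f (c * t))) has_real_derivative c * f' (c * t) / f (c * t)) (at t)"
proof -
  have "((\<lambda>t. ln (f (c * t))) has_real_derivative inverse (f (c * t)) * (c * f' (c * t))) (at t)"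
    by (rule DERIV_chain2[OF DERIV_ln[OF assms(2)] d_lin[OF assms(1)]])
  then show ?thesis by (simp add: divide_inverse mult_ac)
qed

lemma d_ratio_lin:
  assumes "\<And>t. (f has_real_derivative f' t) (at t)" "\<And>t. (f' has_real_derivative f'' t) (at t)"
    "\<And>t. f t > 0"
  shows "((\<lambda>t. f' (c * t) / f (c * t)) has_real_derivative
     c * (f'' (c * t) / f (c * t) - (f' (c * t))\<^sup>2 / (f (c * t))\<^sup>2)) (at t)"
proof -
  have "((\<lambda>t. f' (c * t) / f (c * t)) has_real_derivative
     ((c * f'' (c * t)) * f (c * t) - f' (c * t) * (c * f' (c * t))) / (f (c * t) * f (c * t))) (at t)"
    by (rule DERIV_divide[OF d_lin[OF assms(2)] d_lin[OF assms(1)]]) (use assms(3) in \<open>simp add: less_imp_neq[symmetric]\<close>)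
  moreover have "((c * f'' (c * t)) * f (c * t) - f' (c * t) * (c * f' (c * t))) / (f (c * t) * f (c * t))
      = c * (f'' (c * t) / f (c * t) - (f' (c * t))\<^sup>2 / (f (c * t))\<^sup>2)"
    using assms(3)[of "c * t"] by (simp add: field_simps power2_eq_square)
  ultimately show ?thesis by simp
qed

lemma hess_calc:
  fixes p p1 p2 q q1 q2 :: "real \<Rightarrow> real"
  assumes dp: "\<And>t. (p has_real_derivative p1 t) (at t)" and dp1: "\<And>t. (p1 has_real_derivative p2 t) (at t)"
    and dq: "\<And>t. (q has_real_derivative q1 t) (at t)" and dq1: "\<And>t. (q1 has_real_derivative q2 t) (at t)"
    and pp: "\<And>t. p t > 0" and qp: "\<And>t. q t > 0"
    and g: "g = (\<lambda>t. (ln (p (2 * t)) + ln (q ((-2) * t))) / 2)"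
  shows "(\<forall>t. g differentiable (at t)) \<and> deriv g differentiable (at 0) \<and>
     deriv (deriv g) 0 = 2 * (p2 0 / p 0 - (p1 0)\<^sup>2 / (p 0)\<^sup>2) + 2 * (q2 0 / q 0 - (q1 0)\<^sup>2 / (q 0)\<^sup>2)"
proof -
  define g' where "g' = (\<lambda>t. p1 (2 * t) / p (2 * t) - q1 ((-2) * t) / q ((-2) * t))"
  have dg: "(g has_real_derivative g' t) (at t)" for t
  proof -
    have "((\<lambda>t. (ln (p (2 * t)) + ln (q ((-2) * t))) / 2) has_real_derivative
        (2 * p1 (2 * t) / p (2 * t) + (-2) * q1 ((-2) * t) / q ((-2) * t)) / 2) (at t)"
      by (intro DERIV_cdivide DERIV_add d_ln_lin dp dq pp qp)
    then show ?thesis unfolding g g'_def by (rule DERIV_cong) (simp add: field_simps)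
  qed
  have dg': "deriv g = g'" using dg DERIV_imp_deriv by blast
  have dd: "(g' has_real_derivative 2 * (p2 0 / p 0 - (p1 0)\<^sup>2 / (p 0)\<^sup>2) + 2 * (q2 0 / q 0 - (q1 0)\<^sup>2 / (q 0)\<^sup>2)) (at 0)"
  proof -
    have "(g' has_real_derivative
        2 * (p2 (2 * 0) / p (2 * 0) - (p1 (2 * 0))\<^sup>2 / (p (2 * 0))\<^sup>2)
        - (-2) * (q2 ((-2) * 0) / q ((-2) * 0) - (q1 ((-2) * 0))\<^sup>2 / (q ((-2) * 0))\<^sup>2)) (at 0)"
      unfolding g'_def by (intro DERIV_diff d_ratio_lin dp dp1 dq dq1 pp qp)
    then show ?thesis by (rule DERIV_cong) simp
  qed
  show ?thesis
  proof (intro conjI allI)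
    fix t show "g differentiable (at t)" using dg real_differentiable_def by blast
  next
    show "deriv g differentiable (at 0)" unfolding dg' using dd real_differentiable_def by blast
  next
    show "deriv (deriv g) 0 = 2 * (p2 0 / p 0 - (p1 0)\<^sup>2 / (p 0)\<^sup>2) + 2 * (q2 0 / q 0 - (q1 0)\<^sup>2 / (q 0)\<^sup>2)"
      unfolding dg' using dd by (rule DERIV_imp_deriv)
  qed
qed


lemma mm_diff_l: "(A::complex^'n^'m) ** (B - C) = A ** B - A ** C"
  by (simp add: matrix_matrix_mult_def vec_eq_iff sum_subtractf algebra_simps)

lemma mm_diff_r: "((A::complex^'n^'m) - B) ** C = A ** C - B ** C"
  by (simp add: matrix_matrix_mult_def vec_eq_iff sum_subtractf algebra_simps)

lemma trace_scaleR: "trace (c *\<^sub>R (M::complex^'n^'n)) = of_real c * trace M"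
  unfolding trace_def vector_scaleR_component by (simp add: scaleR_conv_of_real sum_distrib_left)

lemma smat_mult_l: "(c *\<^sub>R mat 1) ** (M::complex^'n^'m) = c *\<^sub>R M"
  by (metis matrix_mul_lid scalar_matrix_assoc)

lemma smat_mult_r: "(M::complex^'n^'m) ** (c *\<^sub>R mat 1) = c *\<^sub>R M"
  by (metis matrix_mul_rid matrix_scalar_ac)

lemma tr_shift:
  fixes H P :: "complex^'m^'m"
  shows "Re (trace ((H - c *\<^sub>R mat 1) ** P ** (H - c *\<^sub>R mat 1)))
    = Re (trace (H ** H ** P)) - 2 * c * Re (trace (H ** P)) + c\<^sup>2 * Re (trace P)"
proof -
  have e: "(H - c *\<^sub>R mat 1) ** P ** (H - c *\<^sub>R mat 1)
      = H ** P ** H - c *\<^sub>R (P ** H) - (c *\<^sub>R (H ** P) - c *\<^sub>R (c *\<^sub>R P))"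
    by (simp add: mm_diff_l mm_diff_r smat_mult_l smat_mult_r scalar_matrix_assoc[symmetric] matrix_scalar_ac
        scaleR_right_diff_distrib)
  have t1: "trace (H ** P ** H) = trace (H ** H ** P)"
    using trace_mul_sym[of "H ** P" H] by (simp add: matrix_mul_assoc)
  have t2: "trace (P ** H) = trace (H ** P)" by (rule trace_mul_sym)
  show ?thesis
    unfolding e trace_sub trace_scaleR t1 t2 by (simp add: power2_eq_square algebra_simps)
qed

lemma real_trace1: "ctransp M = M \<Longrightarrow> trace M = of_real (Re (trace M))"
  by (metis complex_cnj_cancel_iff complex_is_Real_iff trace_ctransp Reals_cnj_iff of_real_Re)

lemma real_trace2:
  assumes "ctransp M1 = M1" "ctransp M2 = M2"
  shows "trace (M1 ** M2) = of_real (Re (trace (M1 ** M2)))"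
proof -
  have "cnj (trace (M1 ** M2)) = trace (M1 ** M2)"
    by (metis assms ctransp_mult trace_ctransp trace_mul_sym)
  then show ?thesis by (metis Reals_cnj_iff of_real_Re)
qed

lemma gram_XA:
  fixes A :: "complex^'n^'m" and X :: "complex^'m^'m"
  assumes invX: "invertible X" and invA: "invertible (A ** ctransp A)"
  shows "invertible ((X ** A) ** ctransp (X ** A))"
    "(X ** A) ** ctransp (X ** A) = X ** A ** ctransp A ** ctransp X"
proof -
  show e: "(X ** A) ** ctransp (X ** A) = X ** A ** ctransp A ** ctransp X"
    by (simp add: ctransp_mult matrix_mul_assoc)
  have "invertible (X ** (A ** ctransp A) ** ctransp X)"
    by (intro invertible_mult invX invA ctransp_inv(2))
  then show "invertible ((X ** A) ** ctransp (X ** A))" unfolding e by (simp add: matrix_mul_assoc)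
qed

lemma part1:
  fixes A :: "complex^'n^'m" and X H :: "complex^'m^'m"
  assumes hH: "hermitian H" and invX: "invertible X" and invA: "invertible (A ** ctransp A)"
  defines "P \<equiv> X ** A ** ctransp A ** ctransp X"
  defines "g \<equiv> (\<lambda>t::real. CA A (mexp (t *\<^sub>R H) ** X))"
  shows "(\<forall>t. g differentiable (at t)) \<and> deriv g differentiable (at 0) \<and>
     hess_form A X H = 2 * (Re (trace (H ** H ** P)) / Re (trace P) - (Re (trace (H ** P)))\<^sup>2 / (Re (trace P))\<^sup>2)
        + 2 * (Re (trace (H ** H ** matrix_inv P)) / Re (trace (matrix_inv P))
               - (Re (trace (H ** matrix_inv P)))\<^sup>2 / (Re (trace (matrix_inv P)))\<^sup>2)"
proof -
  let ?B = "X ** A"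
  have invB: "invertible (?B ** ctransp ?B)" and PB: "?B ** ctransp ?B = P"
    using gram_XA[OF invX invA] unfolding P_def by auto
  let ?Pi = "matrix_inv P"
  have Q: "mexp (t *\<^sub>R H) ** X ** A = mexp (t *\<^sub>R H) ** ?B" for t by (simp add: matrix_mul_assoc)
  have gt: "g t = (ln (fM H P (2 * t)) + ln (fM H ?Pi ((-2) * t))) / 2" for t
  proof -
    have "g t = ln (kappaF (mexp (t *\<^sub>R H) ** ?B))" unfolding g_def CA_def Q ..
    also have "\<dots> = (ln (fM H P (2 * t)) + ln (fM H ?Pi (-(2 * t)))) / 2"
      using kappa_formula(4)[OF flow(1)[OF hH invB, of t]] flow(2,3)[OF hH invB, of t] PB by simp
    finally show ?thesis by simp
  qed
  have pp: "fM H P s > 0" for s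
    using kappa_formula(1)[OF flow(1)[OF hH invB, of "s/2"]] flow(2)[OF hH invB, of "s/2"] PB by simp
  have qp: "fM H ?Pi s > 0" for s
    using kappa_formula(2)[OF flow(1)[OF hH invB, of "-s/2"]] flow(3)[OF hH invB, of "-s/2"] PB by simp
  have g: "g = (\<lambda>t. (ln (fM H P (2 * t)) + ln (fM H ?Pi ((-2) * t))) / 2)" using gt by (rule ext)
  have hc: "(\<forall>t. g differentiable (at t)) \<and> deriv g differentiable (at 0) \<and>
     deriv (deriv g) 0 = 2 * (fM H (H ** (H ** P)) 0 / fM H P 0 - (fM H (H ** P) 0)\<^sup>2 / (fM H P 0)\<^sup>2)
        + 2 * (fM H (H ** (H ** ?Pi)) 0 / fM H ?Pi 0 - (fM H (H ** ?Pi) 0)\<^sup>2 / (fM H ?Pi 0)\<^sup>2)"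
    by (rule hess_calc[OF fM_deriv fM_deriv fM_deriv fM_deriv pp qp g])
  have hf: "hess_form A X H = deriv (deriv g) 0" unfolding hess_form_def g_def ..
  show ?thesis using hc unfolding hf by (simp add: fM_zero matrix_mul_assoc)
qed

lemma ctransp_diff: "ctransp (A - B) = ctransp A - ctransp B"
  by (simp add: vec_eq_iff)

lemma shift_herm: "ctransp H = H \<Longrightarrow> ctransp (H - c *\<^sub>R mat 1) = H - c *\<^sub>R (mat 1 :: complex^'n^'n)"
  by (simp add: ctransp_diff ctransp_scaleR)

lemma div_aux:
  fixes n s S x :: real
  assumes "0 < s" "0 < S" "n \<le> S * x"
  shows "n / (s * S) \<le> x / s"
proof -
  have "n / S \<le> x" using assms by (simp add: pos_divide_le_eq mult.commute)
  then have "n / S / s \<le> x / s" using assms(1) by (intro divide_right_mono) auto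
  then show ?thesis by (metis divide_divide_eq_left mult.commute)
qed

lemma var_bound:
  fixes B :: "complex^'n^'m" and H :: "complex^'m^'m"
  assumes invB: "invertible (B ** ctransp B)" and hH: "ctransp H = H" and trH: "trace H = 0"
    and s: "Re (trace (B ** ctransp B)) > 0"
  shows "Re (trace (H ** H)) \<le> Re (trace (matrix_inv (B ** ctransp B))) *
      (Re (trace (H ** H ** (B ** ctransp B))) - (Re (trace (H ** (B ** ctransp B))))\<^sup>2 / Re (trace (B ** ctransp B)))"
proof -
  let ?P = "B ** ctransp B"
  define c where "c = Re (trace (H ** ?P)) / Re (trace ?P)"
  let ?Y = "H - c *\<^sub>R mat 1"
  have hY: "ctransp ?Y = ?Y" using shift_herm[OF hH] .
  have k: "Re (trace (?Y ** ?Y)) \<le> Re (trace (matrix_inv ?P)) * Re (trace (?Y ** ?P ** ?Y))"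
    by (rule key_ineq[OF invB hY])
  have "Re (trace (?Y ** ?P ** ?Y)) = Re (trace (H ** H ** ?P)) - 2 * c * Re (trace (H ** ?P)) + c\<^sup>2 * Re (trace ?P)"
    by (rule tr_shift)
  also have "\<dots> = Re (trace (H ** H ** ?P)) - (Re (trace (H ** ?P)))\<^sup>2 / Re (trace ?P)"
    unfolding c_def using s by (simp add: field_simps power2_eq_square)
  finally have e1: "Re (trace (?Y ** ?P ** ?Y)) = Re (trace (H ** H ** ?P)) - (Re (trace (H ** ?P)))\<^sup>2 / Re (trace ?P)" .
  have "Re (trace (?Y ** mat 1 ** ?Y)) = Re (trace (H ** H ** mat 1)) - 2 * c * Re (trace (H ** mat 1)) + c\<^sup>2 * Re (trace (mat 1 :: complex^'m^'m))"
    by (rule tr_shift)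
  then have "Re (trace (?Y ** ?Y)) = Re (trace (H ** H)) + c\<^sup>2 * of_nat CARD('m)"
    using trH by (simp add: trace_I)
  then have "Re (trace (H ** H)) \<le> Re (trace (?Y ** ?Y))" by simp
  then show ?thesis using k e1 by simp
qed

lemma part2:
  fixes A :: "complex^'n^'m" and X H :: "complex^'m^'m"
  assumes hH: "hermitian H" and invX: "invertible X" and invA: "invertible (A ** ctransp A)"
    and trH: "trace H = 0" and Hnz: "H \<noteq> 0"
  defines "P \<equiv> X ** A ** ctransp A ** ctransp X"
  shows "2 * (Re (trace (H ** H ** P)) / Re (trace P) - (Re (trace (H ** P)))\<^sup>2 / (Re (trace P))\<^sup>2)
        + 2 * (Re (trace (H ** H ** matrix_inv P)) / Re (trace (matrix_inv P))
               - (Re (trace (H ** matrix_inv P)))\<^sup>2 / (Re (trace (matrix_inv P)))\<^sup>2)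
      \<ge> 4 * Re (trace (H ** H)) / (kappaF (X ** A))\<^sup>2"
    "Re (trace (H ** H)) > 0"
proof -
  let ?B = "X ** A"
  have invB: "invertible (?B ** ctransp ?B)" and PB: "?B ** ctransp ?B = P"
    using gram_XA[OF invX invA] unfolding P_def by auto
  let ?Pi = "matrix_inv P"
  have hH': "ctransp H = H" using hH unfolding hermitian_def .
  have sp: "Re (trace P) > 0" using kappa_formula(1)[OF invB] PB by simp
  have Sp: "Re (trace ?Pi) > 0" using kappa_formula(2)[OF invB] PB by simp
  have kap: "(kappaF ?B)\<^sup>2 = Re (trace P) * Re (trace ?Pi)"
    using kappa_formula(3)[OF invB] PB sp Sp by (simp add: power_mult_distrib)
  show nH: "Re (trace (H ** H)) > 0"
    using frob_herm[OF hH'] frob_pos[OF Hnz] by (metis zero_less_power2 less_irrefl)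
  have PPi: "P ** ?Pi = mat 1" and PiP: "?Pi ** P = mat 1"
    using matrix_inv_both[OF invB] PB by auto
  have hP: "ctransp P = P" using PB by (metis ctransp_mult ctransp_ctransp)
  have hPi: "ctransp ?Pi = ?Pi" using hermitian_inv[OF _ hP] invB PB by simp
  define D where "D = ?Pi ** ?B"
  have DD: "D ** ctransp D = ?Pi"
  proof -
    have "D ** ctransp D = ?Pi ** (?B ** ctransp ?B) ** ?Pi"
      unfolding D_def by (simp add: ctransp_mult hPi matrix_mul_assoc)
    also have "\<dots> = ?Pi" unfolding PB using PiP by simp
    finally show ?thesis .
  qed
  have invPi: "invertible ?Pi" and iiP: "matrix_inv ?Pi = P"
    using matrix_inv_unique[OF PiP] by auto
  have v1: "Re (trace (H ** H)) \<le> Re (trace ?Pi) *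
      (Re (trace (H ** H ** P)) - (Re (trace (H ** P)))\<^sup>2 / Re (trace P))"
    using var_bound[OF invB hH' trH] PB sp by simp
  have v2: "Re (trace (H ** H)) \<le> Re (trace P) *
      (Re (trace (H ** H ** ?Pi)) - (Re (trace (H ** ?Pi)))\<^sup>2 / Re (trace ?Pi))"
    using var_bound[of D H] DD invPi hH' trH Sp iiP by simp
  let ?n = "Re (trace (H ** H))"
  let ?s = "Re (trace P)" let ?S = "Re (trace ?Pi)"
  have e1: "Re (trace (H ** H ** P)) / ?s - (Re (trace (H ** P)))\<^sup>2 / ?s\<^sup>2
      = (Re (trace (H ** H ** P)) - (Re (trace (H ** P)))\<^sup>2 / ?s) / ?s"
    using sp by (simp add: field_simps power2_eq_square)
  have e2: "Re (trace (H ** H ** ?Pi)) / ?S - (Re (trace (H ** ?Pi)))\<^sup>2 / ?S\<^sup>2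
      = (Re (trace (H ** H ** ?Pi)) - (Re (trace (H ** ?Pi)))\<^sup>2 / ?S) / ?S"
    using Sp by (simp add: field_simps power2_eq_square)
  have i1: "?n / (?s * ?S) \<le> (Re (trace (H ** H ** P)) - (Re (trace (H ** P)))\<^sup>2 / ?s) / ?s"
    by (rule div_aux[OF sp Sp v1])
  have i2: "?n / (?S * ?s) \<le> (Re (trace (H ** H ** ?Pi)) - (Re (trace (H ** ?Pi)))\<^sup>2 / ?S) / ?S"
    by (rule div_aux[OF Sp sp v2])
  have "4 * ?n / (kappaF ?B)\<^sup>2 = 2 * (?n / (?s * ?S)) + 2 * (?n / (?S * ?s))"
    unfolding kap by (simp add: mult.commute)
  also have "\<dots> \<le> 2 * ((Re (trace (H ** H ** P)) - (Re (trace (H ** P)))\<^sup>2 / ?s) / ?s)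
       + 2 * ((Re (trace (H ** H ** ?Pi)) - (Re (trace (H ** ?Pi)))\<^sup>2 / ?S) / ?S)"
    using i1 i2 by linarith
  finally show "2 * (Re (trace (H ** H ** P)) / Re (trace P) - (Re (trace (H ** P)))\<^sup>2 / (Re (trace P))\<^sup>2)
        + 2 * (Re (trace (H ** H ** matrix_inv P)) / Re (trace (matrix_inv P))
               - (Re (trace (H ** matrix_inv P)))\<^sup>2 / (Re (trace (matrix_inv P)))\<^sup>2)
      \<ge> 4 * Re (trace (H ** H)) / (kappaF (X ** A))\<^sup>2"
    unfolding e1 e2 .
qed


lemma kappa_pos:
  fixes B :: "complex^'c^'r"
  assumes "invertible (B ** ctransp B)"
  shows "kappaF B > 0"
  using kappa_formula[OF assms] by simp

lemma cplx_aux: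
  fixes z1 z2 z3 z4 z5 z6 :: complex
  assumes "z1 = of_real a2" "z2 = of_real a1" "z3 = of_real s" "z4 = of_real b2" "z5 = of_real b1" "z6 = of_real S"
  shows "z1 / z3 - z2\<^sup>2 / z3\<^sup>2 + z4 / z6 - z5\<^sup>2 / z6\<^sup>2 = of_real (a2 / s - a1\<^sup>2 / s\<^sup>2 + b2 / S - b1\<^sup>2 / S\<^sup>2)"
  unfolding assms by simp

lemma half_aux: "(2 * (x - y) + 2 * (u - v)) / 2 = x - y + u - (v::real)"
  by simp

theorem mainTheorem10:
  fixes A :: "complex^'n^'m" and G :: "(complex^'m^'m) set"
  assumes mn: "CARD('m) \<le> CARD('n)"
    and rkA: "rank A = CARD('m)"
    and symG: "symmetric_subgroup G"
  shows "(\<forall>X\<in>G. \<forall>H\<in>iLie G.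
            let P = X ** A ** ctransp A ** ctransp X;
                Pi = matrix_inv P;
                g = (\<lambda>t::real. CA A (mexp (t *\<^sub>R H) ** X))
            in (\<forall>t. g differentiable (at t)) \<and> (deriv g) differentiable (at 0) \<and>
               complex_of_real (hess_form A X H / 2) =
                 trace (H ** H ** P) / trace P - (trace (H ** P))\<^sup>2 / (trace P)\<^sup>2
               + trace (H ** H ** Pi) / trace Pi - (trace (H ** Pi))\<^sup>2 / (trace Pi)\<^sup>2)
       \<and> (\<forall>X\<in>G. CA A X \<le> CA A (mat 1) \<longrightarrow>
            (\<forall>L. is_hessian G A X L \<longrightarrow>
               (\<forall>(lam::real) H. H \<in> iLie G \<and> H \<noteq> 0 \<and> L H = lam *\<^sub>R H
                   \<longrightarrow> lam \<ge> 4 / (kappaF A)\<^sup>2)))"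
proof -
  have GSL: "G \<subseteq> SL" using symG unfolding symmetric_subgroup_def is_subgroup_SL_def by blast
  have invA: "invertible (A ** ctransp A)"
    by (rule gram_invertible[OF rank_full_right_inv[OF rkA]])
  have invX: "invertible X" if "X \<in> G" for X
    using that GSL by (auto simp: SL_def invertible_det_nz)
  have hermL: "hermitian H" if "H \<in> iLie G" for H
    using that unfolding iLie_def by blast
  have trH: "trace H = 0" if "H \<in> iLie G" for H
  proof (rule trace_zero_if_det)
    fix t
    show "det (mexp (t *\<^sub>R H)) = 1" using that GSL unfolding iLie_def SL_def by blast
  qed
  have P1: "let P = X ** A ** ctransp A ** ctransp X;
                Pi = matrix_inv P;
                g = (\<lambda>t::real. CA A (mexp (t *\<^sub>R H) ** X))
            in (\<forall>t. g differentiable (at t)) \<and> (deriv g) differentiable (at 0) \<and>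
               complex_of_real (hess_form A X H / 2) =
                 trace (H ** H ** P) / trace P - (trace (H ** P))\<^sup>2 / (trace P)\<^sup>2
               + trace (H ** H ** Pi) / trace Pi - (trace (H ** Pi))\<^sup>2 / (trace Pi)\<^sup>2"
    if X: "X \<in> G" and H: "H \<in> iLie G" for X H
  proof -
    let ?P = "X ** A ** ctransp A ** ctransp X"
    let ?Pi = "matrix_inv ?P"
    have hH: "hermitian H" using hermL[OF H] .
    have hH': "ctransp H = H" using hH unfolding hermitian_def .
    have invB: "invertible ((X ** A) ** ctransp (X ** A))" and PB: "(X ** A) ** ctransp (X ** A) = ?P"
      using gram_XA[OF invX[OF X] invA] by auto
    have hP: "ctransp ?P = ?P" using PB by (metis ctransp_mult ctransp_ctransp)
    have hPi: "ctransp ?Pi = ?Pi" using hermitian_inv[OF _ hP] invB PB by simp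
    have hHH: "ctransp (H ** H) = H ** H" using hH' by (simp add: ctransp_mult)
    note p1 = part1[OF hH invX[OF X] invA]
    have r1: "trace (H ** H ** ?P) = of_real (Re (trace (H ** H ** ?P)))" by (rule real_trace2[OF hHH hP])
    have r2: "trace (H ** ?P) = of_real (Re (trace (H ** ?P)))" by (rule real_trace2[OF hH' hP])
    have r3: "trace ?P = of_real (Re (trace ?P))" by (rule real_trace1[OF hP])
    have r4: "trace (H ** H ** ?Pi) = of_real (Re (trace (H ** H ** ?Pi)))" by (rule real_trace2[OF hHH hPi])
    have r5: "trace (H ** ?Pi) = of_real (Re (trace (H ** ?Pi)))" by (rule real_trace2[OF hH' hPi])
    have r6: "trace ?Pi = of_real (Re (trace ?Pi))" by (rule real_trace1[OF hPi])
    have hf: "hess_form A X H = 2 * (Re (trace (H ** H ** ?P)) / Re (trace ?P) - (Re (trace (H ** ?P)))\<^sup>2 / (Re (trace ?P))\<^sup>2)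
        + 2 * (Re (trace (H ** H ** ?Pi)) / Re (trace ?Pi)
               - (Re (trace (H ** ?Pi)))\<^sup>2 / (Re (trace ?Pi))\<^sup>2)"
      using p1 by blast
    have ceq: "complex_of_real (hess_form A X H / 2) =
                 trace (H ** H ** ?P) / trace ?P - (trace (H ** ?P))\<^sup>2 / (trace ?P)\<^sup>2
               + trace (H ** H ** ?Pi) / trace ?Pi - (trace (H ** ?Pi))\<^sup>2 / (trace ?Pi)\<^sup>2"
    proof -
      let ?a2 = "Re (trace (H ** H ** ?P))" let ?a1 = "Re (trace (H ** ?P))" let ?s = "Re (trace ?P)"
      let ?b2 = "Re (trace (H ** H ** ?Pi))" let ?b1 = "Re (trace (H ** ?Pi))" let ?S = "Re (trace ?Pi)"
      have "trace (H ** H ** ?P) / trace ?P - (trace (H ** ?P))\<^sup>2 / (trace ?P)\<^sup>2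
               + trace (H ** H ** ?Pi) / trace ?Pi - (trace (H ** ?Pi))\<^sup>2 / (trace ?Pi)\<^sup>2
            = complex_of_real (?a2 / ?s - ?a1\<^sup>2 / ?s\<^sup>2 + ?b2 / ?S - ?b1\<^sup>2 / ?S\<^sup>2)"
        by (rule cplx_aux[OF r1 r2 r3 r4 r5 r6])
      moreover have "hess_form A X H / 2 = ?a2 / ?s - ?a1\<^sup>2 / ?s\<^sup>2 + ?b2 / ?S - ?b1\<^sup>2 / ?S\<^sup>2"
        unfolding hf by (rule half_aux)
      ultimately show ?thesis by simp
    qed
    show ?thesis unfolding Let_def using p1 ceq by blast
  qed
  have P2: "lam \<ge> 4 / (kappaF A)\<^sup>2"
    if X: "X \<in> G" and C: "CA A X \<le> CA A (mat 1)" and L: "is_hessian G A X L"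
      and H: "H \<in> iLie G" and Hnz: "H \<noteq> 0" and LH: "L H = lam *\<^sub>R H" for X L lam H
  proof -
    let ?P = "X ** A ** ctransp A ** ctransp X"
    have hH: "hermitian H" using hermL[OF H] .
    have hH': "ctransp H = H" using hH unfolding hermitian_def .
    have invB: "invertible ((X ** A) ** ctransp (X ** A))"
      using gram_XA[OF invX[OF X] invA] by auto
    note p1 = part1[OF hH invX[OF X] invA]
    note p2 = part2[OF hH invX[OF X] invA trH[OF H] Hnz]
    let ?n = "Re (trace (H ** H))"
    have hess: "hess_form A X H \<ge> 4 * ?n / (kappaF (X ** A))\<^sup>2"
      using p1 p2(1) by simp
    have n0: "?n > 0" using p2(2) .
    have m1: "minner H (L H) = hess_form A X H" using L H unfolding is_hessian_def by blast
    have m2: "minner H (L H) = lam * ?n"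
      unfolding LH minner_def hH' by (simp add: matrix_scalar_ac scalar_matrix_assoc[symmetric] trace_scaleR)
    have kXA: "kappaF (X ** A) > 0" by (rule kappa_pos[OF invB])
    have kA: "kappaF A > 0" by (rule kappa_pos[OF invA])
    have "ln (kappaF (X ** A)) \<le> ln (kappaF A)" using C unfolding CA_def by simp
    then have kle: "kappaF (X ** A) \<le> kappaF A" using kXA kA by simp
    have "4 * ?n / (kappaF A)\<^sup>2 \<le> 4 * ?n / (kappaF (X ** A))\<^sup>2"
      using kXA kle n0 by (intro divide_left_mono power_mono mult_pos_pos) auto
    also have "\<dots> \<le> lam * ?n" using hess m1 m2 by simp
    finally have f: "4 * ?n / (kappaF A)\<^sup>2 \<le> lam * ?n" .
    have "4 / (kappaF A)\<^sup>2 * ?n = 4 * ?n / (kappaF A)\<^sup>2" by simp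
    then have "4 / (kappaF A)\<^sup>2 * ?n \<le> lam * ?n" using f by simp
    then show ?thesis using n0 by (rule mult_right_le_imp_le)
  qed
  show ?thesis using P1 P2 by blast
qed

end
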